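(* Let $g:\{\pm1\}^{m_1}\times\{\pm1\}^{m_2}\to\{\pm1\}$ be a gadget with $\hat g(S,T)=0$ whenever $S=\emptyset$ or $T=\emptyset$. Then for all $k,d,n$, $$L_{1,k}(g,d,m_1,m_2,n)\le\Bigl(\sum_{S,T}|\hat g(S,T)|\Bigr)^{k}L_{1,k}(\mathrm{XOR},d,1,1,n)\le 2^{(m_1+m_2)k/2}L_{1,k}(\mathrm{XOR},d,1,1,n).$$
   Context: $\hat g(S,T)=\mathbb{E}[g(\mathbf{x},\mathbf{y})\prod_{j\in S}\mathbf{x}_j\prod_{j\in T}\mathbf{y}_j]$ for uniform $\mathbf{x}\in\{\pm1\}^{m_1},\mathbf{y}\in\{\pm1\}^{m_2}$, and the sum is over all $S\subseteq[m_1],T\subseteq[m_2]$. For a randomized two-party protocol $\mathcal{C}:(\{\pm1\}^{m_1})^n\times(\{\pm1\}^{m_2})^n\to[-1,1]$ (value = expected output over internal randomness; inputs are $n$ blocks $x_i\in\{\pm1\}^{m_1}$, $y_i\in\{\pm1\}^{m_2}$), its $g$-fiber is $\mathcal{C}_{\downarrow g}(z)=\mathbb{E}[\mathcal{C}(\mathbf{x},\mathbf{y})\mid g(\mathbf{x}_i,\mathbf{y}_i)=z_i\ \forall i]$ for uniform $\mathbf{x},\mathbf{y}$. For $f:\{\pm1\}^n\to\mathbb{R}$, $L_{1,k}(f)=\sum_{|I|=k}|\hat f(I)|$. $L_{1,k}(g,d,m_1,m_2,n)$ denotes the supremum of $L_{1,k}(\mathcal{C}_{\downarrow g})$ over all such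 randomized protocols with at most $d$ bits of communication. $\mathrm{XOR}:\{\pm1\}\times\{\pm1\}\to\{\pm1\}$ is the gadget $\mathrm{XOR}(a,b)=ab$ (so $m_1=m_2=1$). *)

theory Defs
  imports "HOL-Probability.Probability"
begin

definition cube :: "nat \<Rightarrow> (nat \<Rightarrow> real) set" where
  "cube m = ({..<m} \<rightarrow>\<^sub>E {-1, 1})"

definition ghat :: "((nat \<Rightarrow> real) \<Rightarrow> (nat \<Rightarrow> real) \<Rightarrow> real) \<Rightarrow> nat \<Rightarrow> nat
    \<Rightarrow> nat set \<Rightarrow> nat set \<Rightarrow> real" where
  "ghat g m1 m2 S T = (\<Sum>x\<in>cube m1. \<Sum>y\<in>cube m2.
      g x y * (\<Prod>j\<in>S. x j) * (\<Prod>j\<in>T. y j)) / 2 ^ (m1 + m2)"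

definition fhat :: "((nat \<Rightarrow> real) \<Rightarrow> real) \<Rightarrow> nat \<Rightarrow> nat set \<Rightarrow> real" where
  "fhat f n I = (\<Sum>z\<in>cube n. f z * (\<Prod>i\<in>I. z i)) / 2 ^ n"

definition L1k :: "((nat \<Rightarrow> real) \<Rightarrow> real) \<Rightarrow> nat \<Rightarrow> nat \<Rightarrow> real" where
  "L1k f n k = (\<Sum>I\<in>{I. I \<subseteq> {..<n} \<and> card I = k}. \<bar>fhat f n I\<bar>)"

text \<open>Deterministic two-party protocol trees: Alice's nodes branch on a predicate
  of her input, Bob's nodes on a predicate of his; leaves carry the output.\<close>
datatype ('a, 'b) proto =
    Leaf real
  | ANode "'a \<Rightarrow> bool" "('a, 'b) proto" "('a, 'b) proto"
  | BNode "'b \<Rightarrow> bool" "('a, 'b) proto" "('a, 'b) proto"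

fun eval_proto :: "('a, 'b) proto \<Rightarrow> 'a \<Rightarrow> 'b \<Rightarrow> real" where
  "eval_proto (Leaf v) x y = v"
| "eval_proto (ANode p l r) x y = (if p x then eval_proto l x y else eval_proto r x y)"
| "eval_proto (BNode p l r) x y = (if p y then eval_proto l x y else eval_proto r x y)"

fun cost :: "('a, 'b) proto \<Rightarrow> nat" where
  "cost (Leaf v) = 0"
| "cost (ANode p l r) = Suc (max (cost l) (cost r))"
| "cost (BNode p l r) = Suc (max (cost l) (cost r))"

fun outputs_bounded :: "('a, 'b) proto \<Rightarrow> bool" where
  "outputs_bounded (Leaf v) = (\<bar>v\<bar> \<le> 1)"
| "outputs_bounded (ANode p l r) = (outputs_bounded l \<and> outputs_bounded r)"
| "outputs_bounded (BNode p l r) = (outputs_bounded l \<and> outputs_bounded r)"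

type_synonym input = "nat \<Rightarrow> nat \<Rightarrow> real"  \<comment> \<open>n blocks, block i is a point of a cube\<close>

text \<open>A randomized protocol with at most d bits of communication: a probability
  distribution over deterministic protocols (fixing all random coins) of cost at most d
  with outputs in [-1,1]; its value is the expected output.\<close>
definition rand_protocols :: "nat \<Rightarrow> (input, input) proto pmf set" where
  "rand_protocols d = {p. \<forall>P\<in>set_pmf p. cost P \<le> d \<and> outputs_bounded P}"

definition rvalue :: "(input, input) proto pmf \<Rightarrow> input \<Rightarrow> input \<Rightarrow> real" where
  "rvalue p X Y = measure_pmf.expectation p (\<lambda>P. eval_proto P X Y)"

definition fiber :: "((nat \<Rightarrow> real) \<Rightarrow> (nat \<Rightarrow> real) \<Rightarrow> real) \<Rightarrow> nat \<Rightarrow> nat \<Rightarrow> nat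
    \<Rightarrow> (input \<Rightarrow> input \<Rightarrow> real) \<Rightarrow> (nat \<Rightarrow> real) \<Rightarrow> real" where
  "fiber g m1 m2 n C z =
     (let A = {(X, Y). X \<in> {..<n} \<rightarrow>\<^sub>E cube m1 \<and> Y \<in> {..<n} \<rightarrow>\<^sub>E cube m2
                     \<and> (\<forall>i<n. g (X i) (Y i) = z i)}
      in (\<Sum>(X, Y)\<in>A. C X Y) / card A)"

definition L1k_gadget :: "((nat \<Rightarrow> real) \<Rightarrow> (nat \<Rightarrow> real) \<Rightarrow> real) \<Rightarrow> nat \<Rightarrow> nat \<Rightarrow> nat
    \<Rightarrow> nat \<Rightarrow> nat \<Rightarrow> real" where
  "L1k_gadget g d m1 m2 n k =
     (SUP p\<in>rand_protocols d. L1k (fiber g m1 m2 n (rvalue p)) n k)"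

definition XOR :: "(nat \<Rightarrow> real) \<Rightarrow> (nat \<Rightarrow> real) \<Rightarrow> real" where
  "XOR a b = a 0 * b 0"

end

theory Submission
  imports Defs
begin


lemma cube_mem: "x \<in> cube m \<longleftrightarrow> (\<forall>j<m. x j = -1 \<or> x j = 1) \<and> (\<forall>j. \<not> j < m \<longrightarrow> x j = undefined)"
  unfolding cube_def PiE_iff extensional_def by auto

lemma finite_cube[simp]: "finite (cube m)"
  unfolding cube_def by (auto intro!: finite_PiE)

lemma card_cube: "card (cube m) = 2 ^ m"
  unfolding cube_def by (simp add: card_PiE numeral_2_eq_2)

lemma cube_ne: "cube m \<noteq> {}"
proof -
  have "(\<lambda>j\<in>{..<m}. 1::real) \<in> cube m" by (auto simp: cube_mem)
  then show ?thesis by blast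
qed

definition par :: "(nat \<Rightarrow> real) \<Rightarrow> nat set \<Rightarrow> real" where
  "par x S = (\<Prod>j\<in>S. x j)"

lemma cube_sq: "x \<in> cube m \<Longrightarrow> j < m \<Longrightarrow> x j * x j = 1"
  by (auto simp: cube_mem)

lemma par_sq: assumes "x \<in> cube m" "S \<subseteq> {..<m}" shows "par x S * par x S = 1"
proof -
  have "par x S * par x S = (\<Prod>j\<in>S. x j * x j)" by (simp add: par_def prod.distrib)
  also have "\<dots> = 1" using assms by (intro prod.neutral) (auto simp: cube_sq)
  finally show ?thesis .
qed

lemma char_sum:
  assumes x: "x \<in> cube m" and x': "x' \<in> cube m"
  shows "(\<Sum>S\<in>Pow {..<m}. par x S * par x' S) = (if x = x' then 2 ^ m else 0)"
proof -
  have "(\<Sum>S\<in>Pow {..<m}. par x S * par x' S) = (\<Prod>j<m. x j * x' j + 1)"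
    using prod_add[of "{..<m}" "\<lambda>j. x j * x' j" "\<lambda>_. 1"] by (simp add: par_def prod.distrib)
  also have "\<dots> = (if x = x' then 2 ^ m else 0)"
  proof (cases "x = x'")
    case True
    have "(\<Prod>j<m. x j * x' j + 1) = (\<Prod>j<m. 2::real)"
      using True x by (intro prod.cong) (auto simp: cube_sq)
    then show ?thesis using True by simp
  next
    case False
    then obtain j where j: "x j \<noteq> x' j" by auto
    have "j < m" using j x x' by (cases "j < m") (auto simp: cube_mem)
    moreover have "x j = -1 \<or> x j = 1" "x' j = -1 \<or> x' j = 1" using \<open>j < m\<close> x x' by (auto simp: cube_mem)
    ultimately have "x j * x' j + 1 = 0" using j by auto
    then have "(\<Prod>j<m. x j * x' j + 1) = 0" using \<open>j < m\<close> by (intro prod_zero) auto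
    then show ?thesis using False by simp
  qed
  finally show ?thesis .
qed



lemma ghat_par: "ghat g m1 m2 S T = (\<Sum>x\<in>cube m1. \<Sum>y\<in>cube m2. g x y * par x S * par y T) / 2 ^ (m1 + m2)"
  by (simp add: ghat_def par_def)

lemma swap22: "(\<Sum>a\<in>A. \<Sum>b\<in>B. \<Sum>c\<in>C. \<Sum>d\<in>D. f a b c d) = (\<Sum>c\<in>C. \<Sum>d\<in>D. \<Sum>a\<in>A. \<Sum>b\<in>B. f a b c d)"
proof -
  have "(\<Sum>a\<in>A. \<Sum>b\<in>B. \<Sum>c\<in>C. \<Sum>d\<in>D. f a b c d) = (\<Sum>a\<in>A. \<Sum>c\<in>C. \<Sum>b\<in>B. \<Sum>d\<in>D. f a b c d)"
    by (rule sum.cong[OF refl], rule sum.swap)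
  also have "\<dots> = (\<Sum>a\<in>A. \<Sum>c\<in>C. \<Sum>d\<in>D. \<Sum>b\<in>B. f a b c d)"
    by (rule sum.cong[OF refl], rule sum.cong[OF refl], rule sum.swap)
  also have "\<dots> = (\<Sum>c\<in>C. \<Sum>a\<in>A. \<Sum>d\<in>D. \<Sum>b\<in>B. f a b c d)"
    by (rule sum.swap)
  also have "\<dots> = (\<Sum>c\<in>C. \<Sum>d\<in>D. \<Sum>a\<in>A. \<Sum>b\<in>B. f a b c d)"
    by (rule sum.cong[OF refl], rule sum.swap)
  finally show ?thesis .
qed

lemma ghat_inv:
  assumes x: "x \<in> cube m1" and y: "y \<in> cube m2"
  shows "g x y = (\<Sum>S\<in>Pow {..<m1}. \<Sum>T\<in>Pow {..<m2}. ghat g m1 m2 S T * par x S * par y T)"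
proof -
  let ?N = "(2::real) ^ (m1 + m2)"
  have "(\<Sum>S\<in>Pow {..<m1}. \<Sum>T\<in>Pow {..<m2}. ghat g m1 m2 S T * par x S * par y T)
     = (\<Sum>S\<in>Pow {..<m1}. \<Sum>T\<in>Pow {..<m2}. \<Sum>x'\<in>cube m1. \<Sum>y'\<in>cube m2.
          g x' y' * (par x' S * par x S) * (par y' T * par y T) / ?N)"
  proof (intro sum.cong refl)
    fix S T
    show "ghat g m1 m2 S T * par x S * par y T = (\<Sum>x'\<in>cube m1. \<Sum>y'\<in>cube m2.
          g x' y' * (par x' S * par x S) * (par y' T * par y T) / ?N)"
      unfolding ghat_par sum_divide_distrib sum_distrib_right
      by (intro sum.cong refl) (simp add: mult_ac)
  qed
  also have "\<dots> = (\<Sum>x'\<in>cube m1. \<Sum>y'\<in>cube m2. \<Sum>S\<in>Pow {..<m1}. \<Sum>T\<in>Pow {..<m2}.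
          g x' y' * (par x' S * par x S) * (par y' T * par y T) / ?N)"
    by (rule swap22)
  also have "\<dots> = (\<Sum>x'\<in>cube m1. \<Sum>y'\<in>cube m2.
          g x' y' * (\<Sum>S\<in>Pow {..<m1}. par x' S * par x S) * (\<Sum>T\<in>Pow {..<m2}. par y' T * par y T) / ?N)"
  proof (intro sum.cong refl)
    fix x' y'
    show "(\<Sum>S\<in>Pow {..<m1}. \<Sum>T\<in>Pow {..<m2}.
          g x' y' * (par x' S * par x S) * (par y' T * par y T) / ?N) =
          g x' y' * (\<Sum>S\<in>Pow {..<m1}. par x' S * par x S) * (\<Sum>T\<in>Pow {..<m2}. par y' T * par y T) / ?N"
      unfolding sum_divide_distrib[symmetric] sum_distrib_left sum_distrib_right by (simp add: mult_ac) (rule sum.swap)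
  qed
  also have "\<dots> = (\<Sum>x'\<in>cube m1. \<Sum>y'\<in>cube m2.
          (if x' = x then (if y' = y then g x y else 0) else 0))"
    using x y by (intro sum.cong refl) (auto simp: char_sum power_add)
  also have "\<dots> = (\<Sum>x'\<in>cube m1. if x' = x then (\<Sum>y'\<in>cube m2. if y' = y then g x y else 0) else 0)"
    by (intro sum.cong refl) auto
  also have "\<dots> = g x y" using x y by simp
  finally show ?thesis by simp
qed


lemma parseval:
  assumes gad: "\<And>x y. x \<in> cube m1 \<Longrightarrow> y \<in> cube m2 \<Longrightarrow> g x y \<in> {-1, 1}"
  shows "(\<Sum>S\<in>Pow {..<m1}. \<Sum>T\<in>Pow {..<m2}. ghat g m1 m2 S T * ghat g m1 m2 S T) = 1"
proof -
  let ?N = "(2::real) ^ (m1 + m2)"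
  have "(\<Sum>S\<in>Pow {..<m1}. \<Sum>T\<in>Pow {..<m2}. ghat g m1 m2 S T * ghat g m1 m2 S T)
     = (\<Sum>S\<in>Pow {..<m1}. \<Sum>T\<in>Pow {..<m2}. \<Sum>x\<in>cube m1. \<Sum>y\<in>cube m2.
          g x y * (ghat g m1 m2 S T * par x S * par y T) / ?N)"
  proof (intro sum.cong refl)
    fix S T
    have "ghat g m1 m2 S T * ghat g m1 m2 S T = ghat g m1 m2 S T * ((\<Sum>x\<in>cube m1. \<Sum>y\<in>cube m2. g x y * par x S * par y T) / ?N)"
      by (simp only: ghat_par[of g m1 m2 S T, symmetric])
    also have "\<dots> = (\<Sum>x\<in>cube m1. \<Sum>y\<in>cube m2. g x y * (ghat g m1 m2 S T * par x S * par y T) / ?N)"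
      unfolding sum_divide_distrib sum_distrib_left by (intro sum.cong refl) (simp add: mult_ac)
    finally show "ghat g m1 m2 S T * ghat g m1 m2 S T = (\<Sum>x\<in>cube m1. \<Sum>y\<in>cube m2. g x y * (ghat g m1 m2 S T * par x S * par y T) / ?N)" .
  qed
  also have "\<dots> = (\<Sum>x\<in>cube m1. \<Sum>y\<in>cube m2. \<Sum>S\<in>Pow {..<m1}. \<Sum>T\<in>Pow {..<m2}.
          g x y * (ghat g m1 m2 S T * par x S * par y T) / ?N)"
    by (rule swap22)
  also have "\<dots> = (\<Sum>x\<in>cube m1. \<Sum>y\<in>cube m2. g x y * g x y / ?N)"
  proof (intro sum.cong refl)
    fix x y assume x: "x \<in> cube m1" and y: "y \<in> cube m2"
    have "g x y * g x y / ?N = g x y * (\<Sum>S\<in>Pow {..<m1}. \<Sum>T\<in>Pow {..<m2}. ghat g m1 m2 S T * par x S * par y T) / ?N"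
      by (rule arg_cong[where f="\<lambda>t. g x y * t / ?N"], rule ghat_inv[OF x y])
    also have "\<dots> = (\<Sum>S\<in>Pow {..<m1}. \<Sum>T\<in>Pow {..<m2}. g x y * (ghat g m1 m2 S T * par x S * par y T) / ?N)"
      unfolding sum_divide_distrib sum_distrib_left by (rule refl)
    finally show "(\<Sum>S\<in>Pow {..<m1}. \<Sum>T\<in>Pow {..<m2}. g x y * (ghat g m1 m2 S T * par x S * par y T) / ?N) = g x y * g x y / ?N" by simp
  qed
  also have "\<dots> = (\<Sum>x\<in>cube m1. \<Sum>y\<in>cube m2. 1 / ?N)"
  proof (intro sum.cong refl)
    fix x y assume "x \<in> cube m1" "y \<in> cube m2"
    then have "g x y = -1 \<or> g x y = 1" using gad by auto
    then show "g x y * g x y / ?N = 1 / ?N" by auto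
  qed
  also have "\<dots> = 1" by (simp add: card_cube power_add)
  finally show ?thesis .
qed

lemma sum_g_zero:
  assumes "ghat g m1 m2 {} {} = 0"
  shows "(\<Sum>x\<in>cube m1. \<Sum>y\<in>cube m2. g x y) = 0"
  using assms by (simp add: ghat_def)

definition Lv :: "((nat \<Rightarrow> real) \<Rightarrow> (nat \<Rightarrow> real) \<Rightarrow> real) \<Rightarrow> nat \<Rightarrow> nat \<Rightarrow> real \<Rightarrow> ((nat \<Rightarrow> real) \<times> (nat \<Rightarrow> real)) set" where
  "Lv g m1 m2 c = {(x, y). x \<in> cube m1 \<and> y \<in> cube m2 \<and> g x y = c}"

lemma card_Lv: "real (card (Lv g m1 m2 c)) = (\<Sum>x\<in>cube m1. \<Sum>y\<in>cube m2. if g x y = c then 1 else 0)"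
proof -
  have "Lv g m1 m2 c = {p \<in> cube m1 \<times> cube m2. g (fst p) (snd p) = c}"
    by (auto simp: Lv_def)
  then have "real (card (Lv g m1 m2 c)) = (\<Sum>p\<in>cube m1 \<times> cube m2. if g (fst p) (snd p) = c then 1 else 0)"
    by (simp add: sum.inter_filter[symmetric])
  also have "\<dots> = (\<Sum>x\<in>cube m1. \<Sum>y\<in>cube m2. if g x y = c then 1 else 0)"
    by (simp add: sum.cartesian_product case_prod_beta)
  finally show ?thesis .
qed

lemma balanced:
  assumes gad: "\<And>x y. x \<in> cube m1 \<Longrightarrow> y \<in> cube m2 \<Longrightarrow> g x y \<in> {-1, 1}"
    and z: "(\<Sum>x\<in>cube m1. \<Sum>y\<in>cube m2. g x y) = 0" and c: "c \<in> {-1, 1}"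
  shows "real (card (Lv g m1 m2 c)) = 2 ^ (m1 + m2) / 2"
proof -
  have "real (card (Lv g m1 m2 c)) = (\<Sum>x\<in>cube m1. \<Sum>y\<in>cube m2. (1 + c * g x y) / 2)"
    unfolding card_Lv
  proof (intro sum.cong refl)
    fix x y assume "x \<in> cube m1" "y \<in> cube m2"
    then have "g x y = -1 \<or> g x y = 1" using gad by auto
    then show "(if g x y = c then 1 else 0) = (1 + c * g x y) / 2" using c by auto
  qed
  also have "\<dots> = (\<Sum>x\<in>cube m1. \<Sum>y\<in>cube m2. 1 / 2) + c * (\<Sum>x\<in>cube m1. \<Sum>y\<in>cube m2. g x y) / 2"
    unfolding add_divide_distrib sum.distrib sum_distrib_left sum_divide_distrib by (simp add: mult_ac)
  also have "\<dots> = 2 ^ (m1 + m2) / 2" using z by (simp add: card_cube power_add)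
  finally show ?thesis .
qed


definition Bl :: "nat \<Rightarrow> nat \<Rightarrow> input set" where
  "Bl m n = {..<n} \<rightarrow>\<^sub>E cube m"

lemma finite_Bl[simp]: "finite (Bl m n)"
  unfolding Bl_def by (auto intro!: finite_PiE)

lemma card_Bl: "card (Bl m n) = 2 ^ (m * n)"
  unfolding Bl_def by (simp add: card_PiE card_cube power_mult)

definition Af :: "((nat \<Rightarrow> real) \<Rightarrow> (nat \<Rightarrow> real) \<Rightarrow> real) \<Rightarrow> nat \<Rightarrow> nat \<Rightarrow> nat \<Rightarrow> (nat \<Rightarrow> real) \<Rightarrow> (input \<times> input) set" where
  "Af g m1 m2 n z = {(X, Y). X \<in> Bl m1 n \<and> Y \<in> Bl m2 n \<and> (\<forall>i<n. g (X i) (Y i) = z i)}"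

lemma fiber_eq: "fiber g m1 m2 n C z = (\<Sum>p\<in>Af g m1 m2 n z. C (fst p) (snd p)) / card (Af g m1 m2 n z)"
  unfolding fiber_def Let_def Af_def Bl_def by (simp add: case_prod_beta)

lemma finite_Af[simp]: "finite (Af g m1 m2 n z)"
proof -
  have "Af g m1 m2 n z \<subseteq> Bl m1 n \<times> Bl m2 n" by (auto simp: Af_def)
  then show ?thesis by (rule finite_subset) auto
qed

lemma card_Af:
  assumes z: "z \<in> cube n" and K: "\<And>c. c \<in> {-1, 1} \<Longrightarrow> real (card (Lv g m1 m2 c)) = K"
  shows "real (card (Af g m1 m2 n z)) = K ^ n"
proof -
  let ?F = "\<lambda>p. (\<lambda>i\<in>{..<n}. (fst p i, snd p i))"
  let ?G = "\<lambda>\<Phi>. ((\<lambda>i\<in>{..<n}. fst (\<Phi> i)), (\<lambda>i\<in>{..<n}. snd (\<Phi> i)))"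
  have "bij_betw ?F (Af g m1 m2 n z) (PiE {..<n} (\<lambda>i. Lv g m1 m2 (z i)))"
  proof (rule bij_betw_byWitness[where f'="?G"])
    show "\<forall>a\<in>Af g m1 m2 n z. ?G (?F a) = a"
      by (auto simp: Af_def Bl_def PiE_iff extensional_def fun_eq_iff)
    show "\<forall>a'\<in>PiE {..<n} (\<lambda>i. Lv g m1 m2 (z i)). ?F (?G a') = a'"
      by (auto simp: PiE_iff extensional_def fun_eq_iff)
    show "?F ` Af g m1 m2 n z \<subseteq> PiE {..<n} (\<lambda>i. Lv g m1 m2 (z i))"
    proof (rule image_subsetI)
      fix p assume p: "p \<in> Af g m1 m2 n z"
      show "?F p \<in> PiE {..<n} (\<lambda>i. Lv g m1 m2 (z i))"
        unfolding restrict_PiE_iff using p by (auto simp: Af_def Bl_def PiE_iff Lv_def)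
    qed
    show "?G ` PiE {..<n} (\<lambda>i. Lv g m1 m2 (z i)) \<subseteq> Af g m1 m2 n z"
    proof (rule image_subsetI)
      fix \<Phi> assume \<Phi>: "\<Phi> \<in> PiE {..<n} (\<lambda>i. Lv g m1 m2 (z i))"
      have "\<forall>i<n. fst (\<Phi> i) \<in> cube m1 \<and> snd (\<Phi> i) \<in> cube m2 \<and> g (fst (\<Phi> i)) (snd (\<Phi> i)) = z i"
      proof (intro allI impI)
        fix i assume "i < n"
        then have "\<Phi> i \<in> Lv g m1 m2 (z i)" using \<Phi> by auto
        then show "fst (\<Phi> i) \<in> cube m1 \<and> snd (\<Phi> i) \<in> cube m2 \<and> g (fst (\<Phi> i)) (snd (\<Phi> i)) = z i"
          by (cases "\<Phi> i") (simp add: Lv_def)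
      qed
      then show "?G \<Phi> \<in> Af g m1 m2 n z" by (simp add: Af_def Bl_def restrict_PiE_iff)
    qed
  qed
  then have "card (Af g m1 m2 n z) = card (PiE {..<n} (\<lambda>i. Lv g m1 m2 (z i)))"
    by (rule bij_betw_same_card)
  also have "\<dots> = (\<Prod>i<n. card (Lv g m1 m2 (z i)))" by (simp add: card_PiE)
  finally have "real (card (Af g m1 m2 n z)) = (\<Prod>i<n. real (card (Lv g m1 m2 (z i))))" by simp
  also have "\<dots> = (\<Prod>i<n. K)" using z by (intro prod.cong refl K) (auto simp: cube_mem)
  finally show ?thesis by simp
qed

lemma fhat_fiber:
  assumes gad: "\<And>x y. x \<in> cube m1 \<Longrightarrow> y \<in> cube m2 \<Longrightarrow> g x y \<in> {-1, 1}"
    and K: "\<And>c. c \<in> {-1, 1} \<Longrightarrow> real (card (Lv g m1 m2 c)) = 2 ^ (m1 + m2) / 2"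
    and I: "I \<subseteq> {..<n}"
  shows "fhat (fiber g m1 m2 n C) n I
       = (\<Sum>X\<in>Bl m1 n. \<Sum>Y\<in>Bl m2 n. C X Y * (\<Prod>i\<in>I. g (X i) (Y i))) / 2 ^ ((m1 + m2) * n)"
proof -
  let ?K = "(2::real) ^ (m1 + m2) / 2"
  let ?h = "\<lambda>p. C (fst p) (snd p) * (\<Prod>i\<in>I. g (fst p i) (snd p i))"
  let ?\<phi> = "\<lambda>p. (\<lambda>i\<in>{..<n}. g (fst p i) (snd p i))"
  have "fhat (fiber g m1 m2 n C) n I = (\<Sum>z\<in>cube n. fiber g m1 m2 n C z * (\<Prod>i\<in>I. z i)) / 2 ^ n"
    by (simp add: fhat_def)
  also have "\<dots> = (\<Sum>z\<in>cube n. (\<Sum>p\<in>Af g m1 m2 n z. ?h p) / ?K ^ n) / 2 ^ n"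
  proof (intro arg_cong[where f="\<lambda>t. t / 2 ^ n"] sum.cong refl)
    fix z assume z: "z \<in> cube n"
    have "fiber g m1 m2 n C z * (\<Prod>i\<in>I. z i) = (\<Sum>p\<in>Af g m1 m2 n z. C (fst p) (snd p) * (\<Prod>i\<in>I. z i)) / ?K ^ n"
      using card_Af[OF z K] by (simp add: fiber_eq sum_distrib_right)
    also have "\<dots> = (\<Sum>p\<in>Af g m1 m2 n z. ?h p) / ?K ^ n"
    proof (intro arg_cong[where f="\<lambda>t. t / ?K ^ n"] sum.cong refl)
      fix p assume "p \<in> Af g m1 m2 n z"
      then have "\<forall>i\<in>I. z i = g (fst p i) (snd p i)" using I by (auto simp: Af_def)
      then show "C (fst p) (snd p) * (\<Prod>i\<in>I. z i) = ?h p" by simp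
    qed
    finally show "fiber g m1 m2 n C z * (\<Prod>i\<in>I. z i) = (\<Sum>p\<in>Af g m1 m2 n z. ?h p) / ?K ^ n" .
  qed
  also have "\<dots> = (\<Sum>z\<in>cube n. (\<Sum>p\<in>{p \<in> Bl m1 n \<times> Bl m2 n. ?\<phi> p = z}. ?h p)) / ?K ^ n / 2 ^ n"
  proof -
    have "\<And>z. z \<in> cube n \<Longrightarrow> {p \<in> Bl m1 n \<times> Bl m2 n. ?\<phi> p = z} = Af g m1 m2 n z"
      by (auto simp: Af_def cube_mem fun_eq_iff)
    then show ?thesis by (simp add: sum_divide_distrib)
  qed
  also have "\<dots> = (\<Sum>p\<in>Bl m1 n \<times> Bl m2 n. ?h p) / ?K ^ n / 2 ^ n"
  proof -
    have "?\<phi> ` (Bl m1 n \<times> Bl m2 n) \<subseteq> cube n"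
      using gad by (auto simp: cube_mem Bl_def PiE_iff)
    then show ?thesis by (subst sum.group) auto
  qed
  also have "\<dots> = (\<Sum>X\<in>Bl m1 n. \<Sum>Y\<in>Bl m2 n. C X Y * (\<Prod>i\<in>I. g (X i) (Y i))) / 2 ^ ((m1 + m2) * n)"
  proof -
    have "?K ^ n * 2 ^ n = 2 ^ ((m1 + m2) * n)"
      by (simp add: power_mult_distrib[symmetric] power_mult)
    then show ?thesis by (simp add: sum.cartesian_product divide_divide_eq_left case_prod_beta)
  qed
  finally show ?thesis .
qed


fun reinput :: "('a \<Rightarrow> 'c) \<Rightarrow> ('b \<Rightarrow> 'd) \<Rightarrow> ('c, 'd) proto \<Rightarrow> ('a, 'b) proto" where
  "reinput f h (Leaf v) = Leaf v"
| "reinput f h (ANode q l r) = ANode (\<lambda>x. q (f x)) (reinput f h l) (reinput f h r)"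
| "reinput f h (BNode q l r) = BNode (\<lambda>y. q (h y)) (reinput f h l) (reinput f h r)"

lemma eval_reinput: "eval_proto (reinput f h P) x y = eval_proto P (f x) (h y)"
  by (induction P) auto

lemma cost_reinput: "cost (reinput f h P) = cost P"
  by (induction P) auto

lemma ob_reinput: "outputs_bounded (reinput f h P) = outputs_bounded P"
  by (induction P) auto

lemma rand_map: "p \<in> rand_protocols d \<Longrightarrow> map_pmf (reinput f h) p \<in> rand_protocols d"
  by (auto simp: rand_protocols_def cost_reinput ob_reinput)

lemma rvalue_map: "rvalue (map_pmf (reinput f h) p) x y = rvalue p (f x) (h y)"
  by (simp add: rvalue_def eval_reinput)

lemma eval_bound: "outputs_bounded P \<Longrightarrow> \<bar>eval_proto P x y\<bar> \<le> 1"
  by (induction P) auto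

lemma rvalue_bound:
  assumes p: "p \<in> rand_protocols d"
  shows "\<bar>rvalue p x y\<bar> \<le> 1"
proof -
  have b: "AE P in measure_pmf p. \<bar>eval_proto P x y\<bar> \<le> 1"
    using p by (intro AE_pmfI) (auto simp: rand_protocols_def intro: eval_bound)
  have int: "integrable (measure_pmf p) (\<lambda>P. eval_proto P x y)"
    by (rule measure_pmf.integrable_const_bound[where B=1]) (use b in simp_all)
  have b1: "AE P in measure_pmf p. eval_proto P x y \<le> 1" and b2: "AE P in measure_pmf p. -1 \<le> eval_proto P x y"
    by (rule eventually_mono[OF b], simp)+
  have "rvalue p x y \<le> 1" unfolding rvalue_def
    by (rule measure_pmf.integral_le_const[OF int b1])
  moreover have "-1 \<le> rvalue p x y" unfolding rvalue_def
    by (rule measure_pmf.integral_ge_const[OF int b2])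
  ultimately show ?thesis by auto
qed

lemma fiber_bound:
  assumes "\<And>X Y. \<bar>C X Y\<bar> \<le> 1"
  shows "\<bar>fiber g m1 m2 n C z\<bar> \<le> 1"
proof -
  let ?A = "Af g m1 m2 n z"
  let ?s = "\<Sum>p\<in>?A. C (fst p) (snd p)"
  have "\<bar>?s\<bar> \<le> (\<Sum>p\<in>?A. 1)"
    by (rule order_trans[OF sum_abs]) (intro sum_mono assms)
  then have s: "\<bar>?s\<bar> \<le> real (card ?A)" by simp
  show ?thesis
  proof (cases "card ?A = 0")
    case True
    then show ?thesis unfolding fiber_eq by simp
  next
    case False
    then have pos: "0 < real (card ?A)" by (simp add: card_gt_0_iff)
    have "\<bar>?s / real (card ?A)\<bar> = \<bar>?s\<bar> / real (card ?A)" using pos by (simp add: abs_divide)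
    also have "\<dots> \<le> 1" using s pos by (simp add: pos_divide_le_eq)
    finally show ?thesis unfolding fiber_eq .
  qed
qed

lemma fhat_bound:
  assumes "\<And>z. \<bar>f z\<bar> \<le> 1" and I: "I \<subseteq> {..<n}"
  shows "\<bar>fhat f n I\<bar> \<le> 1"
proof -
  have "\<bar>\<Sum>z\<in>cube n. f z * (\<Prod>i\<in>I. z i)\<bar> \<le> (\<Sum>z\<in>cube n. 1)"
  proof (rule order_trans[OF sum_abs], intro sum_mono)
    fix z assume z: "z \<in> cube n"
    have pb: "\<bar>\<Prod>i\<in>I. z i\<bar> \<le> 1"
      unfolding abs_prod
    proof (rule prod_le_1)
      fix i assume "i \<in> I"
      then have "i < n" using I by auto
      then have "z i = -1 \<or> z i = 1" using z by (simp add: cube_mem)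
      then show "0 \<le> \<bar>z i\<bar> \<and> \<bar>z i\<bar> \<le> 1" by auto
    qed
    show "\<bar>f z * (\<Prod>i\<in>I. z i)\<bar> \<le> 1"
      unfolding abs_mult by (rule mult_le_one[OF assms(1)[of z] abs_ge_zero pb])
  qed
  then have s: "\<bar>\<Sum>z\<in>cube n. f z * (\<Prod>i\<in>I. z i)\<bar> \<le> 2 ^ n" by (simp add: card_cube)
  have "\<bar>fhat f n I\<bar> = \<bar>\<Sum>z\<in>cube n. f z * (\<Prod>i\<in>I. z i)\<bar> / 2 ^ n"
    unfolding fhat_def by (simp add: abs_divide)
  also have "\<dots> \<le> 1" using s by (simp add: pos_divide_le_eq)
  finally show ?thesis .
qed

definition Ik :: "nat \<Rightarrow> nat \<Rightarrow> nat set set" where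
  "Ik n k = {I. I \<subseteq> {..<n} \<and> card I = k}"

lemma finite_Ik[simp]: "finite (Ik n k)"
proof -
  have "Ik n k \<subseteq> Pow {..<n}" by (auto simp: Ik_def)
  then show ?thesis by (rule finite_subset) auto
qed

lemma L1k_Ik: "L1k f n k = (\<Sum>I\<in>Ik n k. \<bar>fhat f n I\<bar>)"
  by (simp add: L1k_def Ik_def)

lemma L1k_nonneg: "0 \<le> L1k f n k"
  unfolding L1k_def by (rule sum_nonneg) auto

lemma L1k_fiber_bound:
  assumes "p \<in> rand_protocols d"
  shows "L1k (fiber g m1 m2 n (rvalue p)) n k \<le> real (card (Ik n k))"
proof -
  have "L1k (fiber g m1 m2 n (rvalue p)) n k \<le> (\<Sum>I\<in>Ik n k. 1)"
    unfolding L1k_Ik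
    by (intro sum_mono fhat_bound fiber_bound rvalue_bound[OF assms]) (auto simp: Ik_def)
  then show ?thesis by simp
qed

lemma rp_nonempty: "return_pmf (Leaf 0) \<in> rand_protocols d"
  by (simp add: rand_protocols_def)

lemma bdd_L1k: "bdd_above ((\<lambda>p. L1k (fiber g m1 m2 n (rvalue p)) n k) ` rand_protocols d)"
proof (rule bdd_aboveI2)
  fix p assume "p \<in> rand_protocols d"
  then show "L1k (fiber g m1 m2 n (rvalue p)) n k \<le> real (card (Ik n k))" by (rule L1k_fiber_bound)
qed

lemma L1k_le_gadget:
  assumes "p \<in> rand_protocols d"
  shows "L1k (fiber g m1 m2 n (rvalue p)) n k \<le> L1k_gadget g d m1 m2 n k"
  unfolding L1k_gadget_def by (rule cSUP_upper[OF assms bdd_L1k])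

lemma gadget_nonneg: "0 \<le> L1k_gadget g d m1 m2 n k"
  by (rule order_trans[OF L1k_nonneg L1k_le_gadget[OF rp_nonempty]])

lemma gadget_least:
  assumes "\<And>p. p \<in> rand_protocols d \<Longrightarrow> L1k (fiber g m1 m2 n (rvalue p)) n k \<le> B"
  shows "L1k_gadget g d m1 m2 n k \<le> B"
  unfolding L1k_gadget_def
  by (rule cSUP_least) (use rp_nonempty assms in auto)


lemma Bl_mem: "X \<in> Bl m n \<longleftrightarrow> (\<forall>j<n. X j \<in> cube m) \<and> (\<forall>j. \<not> j < n \<longrightarrow> X j = undefined)"
  by (auto simp: Bl_def PiE_iff extensional_def)

definition pm :: "real \<Rightarrow> bool" where "pm v \<longleftrightarrow> v = -1 \<or> v = 1"

lemma pm_mult: "pm a \<Longrightarrow> pm b \<Longrightarrow> pm (a * b)"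
  by (auto simp: pm_def)

lemma pm_sq: "pm a \<Longrightarrow> a * a = 1"
  by (auto simp: pm_def)

lemma pm_cube: "x \<in> cube m \<Longrightarrow> j < m \<Longrightarrow> pm (x j)"
  by (auto simp: pm_def cube_mem)

lemma pm_par: assumes "x \<in> cube m" "S \<subseteq> {..<m}" shows "pm (par x S)"
  using par_sq[OF assms] square_eq_1_iff[of "par x S"] by (auto simp: pm_def)

lemma pm_Bl1: "a \<in> Bl 1 n \<Longrightarrow> j < n \<Longrightarrow> pm (a j 0)"
  by (auto simp: Bl_mem intro: pm_cube)

definition good :: "nat \<Rightarrow> nat \<Rightarrow> (nat \<Rightarrow> real) \<Rightarrow> (nat \<Rightarrow> nat set) \<Rightarrow> bool" where
  "good m n \<sigma> S \<longleftrightarrow> (\<forall>j<n. pm (\<sigma> j) \<and> S j \<subseteq> {..<m} \<and> S j \<noteq> {})"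

definition tauf :: "nat \<Rightarrow> (nat \<Rightarrow> real) \<Rightarrow> (nat \<Rightarrow> nat set) \<Rightarrow> input \<Rightarrow> input \<Rightarrow> input" where
  "tauf n \<sigma> S X0 a = (\<lambda>j\<in>{..<n}. \<lambda>t\<in>{..<1}. \<sigma> j * a j t * par (X0 j) (S j))"

definition Gm :: "nat \<Rightarrow> nat \<Rightarrow> (nat \<Rightarrow> nat set) \<Rightarrow> input \<Rightarrow> input \<Rightarrow> input" where
  "Gm m n S X0 a = (\<lambda>j\<in>{..<n}. \<lambda>t\<in>{..<m}. X0 j t * (if t = Min (S j) then a j 0 else 1))"

definition fA :: "nat \<Rightarrow> nat \<Rightarrow> (nat \<Rightarrow> real) \<Rightarrow> (nat \<Rightarrow> nat set) \<Rightarrow> input \<Rightarrow> input \<Rightarrow> input" where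
  "fA m n \<sigma> S X0 a = Gm m n S X0 (tauf n \<sigma> S X0 a)"

lemma tau_apply: "j < n \<Longrightarrow> tauf n \<sigma> S X0 a j 0 = \<sigma> j * a j 0 * par (X0 j) (S j)"
  by (simp add: tauf_def)

lemma tau_mem:
  assumes gd: "good m n \<sigma> S" and X0: "X0 \<in> Bl m n" and a: "a \<in> Bl 1 n"
  shows "tauf n \<sigma> S X0 a \<in> Bl 1 n"
  unfolding Bl_mem
proof (intro conjI allI impI)
  fix j assume j: "j < n"
  have p1: "pm (\<sigma> j)" using gd j by (simp add: good_def)
  have p2: "pm (a j 0)" using a j by (rule pm_Bl1)
  have X0j: "X0 j \<in> cube m" using X0 j by (simp add: Bl_mem)
  have Sj: "S j \<subseteq> {..<m}" using gd j by (simp add: good_def)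
  have p3: "pm (par (X0 j) (S j))" using X0j Sj by (rule pm_par)
  have p: "pm (\<sigma> j * a j 0 * par (X0 j) (S j))" using pm_mult[OF pm_mult[OF p1 p2] p3] .
  show "tauf n \<sigma> S X0 a j \<in> cube 1"
    unfolding cube_mem
  proof (intro conjI allI impI)
    fix t :: nat assume "t < 1"
    then have "t = 0" by simp
    then show "tauf n \<sigma> S X0 a j t = -1 \<or> tauf n \<sigma> S X0 a j t = 1"
      using p j by (simp add: tauf_def pm_def)
  next
    fix t :: nat assume "\<not> t < 1"
    then show "tauf n \<sigma> S X0 a j t = undefined" using j by (simp add: tauf_def)
  qed
next
  fix j assume "\<not> j < n" then show "tauf n \<sigma> S X0 a j = undefined" by (simp add: tauf_def)
qed

lemma tau_inv:
  assumes gd: "good m n \<sigma> S" and X0: "X0 \<in> Bl m n" and a: "a \<in> Bl 1 n"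
  shows "tauf n \<sigma> S X0 (tauf n \<sigma> S X0 a) = a"
proof (rule ext)
  fix j show "tauf n \<sigma> S X0 (tauf n \<sigma> S X0 a) j = a j"
  proof (cases "j < n")
    case True
    have aj: "a j \<in> cube 1" using a True by (simp add: Bl_mem)
    have s1: "\<sigma> j * \<sigma> j = 1" using gd True by (intro pm_sq) (simp add: good_def)
    have s2: "par (X0 j) (S j) * par (X0 j) (S j) = 1"
      using gd True X0 by (intro par_sq) (auto simp: good_def Bl_mem)
    show ?thesis
    proof (rule ext)
      fix t show "tauf n \<sigma> S X0 (tauf n \<sigma> S X0 a) j t = a j t"
      proof (cases "t < 1")
        case True
        then have "t = 0" by simp
        have "\<sigma> j * (\<sigma> j * a j 0 * par (X0 j) (S j)) * par (X0 j) (S j)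
              = (\<sigma> j * \<sigma> j) * (par (X0 j) (S j) * par (X0 j) (S j)) * a j 0"
          by (simp add: mult_ac)
        then show ?thesis using \<open>j < n\<close> \<open>t = 0\<close> s1 s2 by (simp add: tauf_def)
      next
        case False
        then show ?thesis using \<open>j < n\<close> aj by (simp add: tauf_def cube_mem)
      qed
    qed
  next
    case False
    then show ?thesis using a by (simp add: tauf_def Bl_mem)
  qed
qed

lemma Gm_mem:
  assumes X: "X \<in> Bl m n" and a: "a \<in> Bl 1 n"
  shows "Gm m n S X a \<in> Bl m n"
  unfolding Bl_mem
proof (intro conjI allI impI)
  fix j assume j: "j < n"
  have Xj: "X j \<in> cube m" using X j by (simp add: Bl_mem)
  have aj: "pm (a j 0)" using a j by (rule pm_Bl1)
  show "Gm m n S X a j \<in> cube m"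
    unfolding cube_mem
  proof (intro conjI allI impI)
    fix t assume t: "t < m"
    have "pm (X j t * (if t = Min (S j) then a j 0 else 1))"
      using pm_cube[OF Xj t] aj by (intro pm_mult) (auto simp: pm_def)
    then show "Gm m n S X a j t = -1 \<or> Gm m n S X a j t = 1" using j t by (simp add: Gm_def pm_def)
  next
    fix t assume "\<not> t < m" then show "Gm m n S X a j t = undefined" using j by (simp add: Gm_def)
  qed
next
  fix j assume "\<not> j < n" then show "Gm m n S X a j = undefined" by (simp add: Gm_def)
qed

lemma Gm_inv:
  assumes X: "X \<in> Bl m n" and a: "a \<in> Bl 1 n"
  shows "Gm m n S (Gm m n S X a) a = X"
proof (rule ext)
  fix j show "Gm m n S (Gm m n S X a) a j = X j"
  proof (cases "j < n")
    case True
    have Xj: "X j \<in> cube m" using X True by (simp add: Bl_mem)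
    have aj: "a j 0 * a j 0 = 1" using pm_Bl1[OF a True] by (rule pm_sq)
    show ?thesis
    proof (rule ext)
      fix t show "Gm m n S (Gm m n S X a) a j t = X j t"
      proof (cases "t < m")
        case True
        have "X j t * (if t = Min (S j) then a j 0 else 1) * (if t = Min (S j) then a j 0 else 1) = X j t"
          using aj by (simp add: mult.assoc)
        then show ?thesis using \<open>j < n\<close> True by (simp add: Gm_def)
      next
        case False
        then show ?thesis using \<open>j < n\<close> Xj by (simp add: Gm_def cube_mem)
      qed
    qed
  next
    case False
    then show ?thesis using X by (simp add: Gm_def Bl_mem)
  qed
qed

lemma par_Gm:
  assumes gd: "good m n \<sigma> S" and j: "j < n"
  shows "par (Gm m n S X a j) (S j) = par (X j) (S j) * a j 0"
proof -
  have Sj: "S j \<subseteq> {..<m}" "S j \<noteq> {}" using gd j by (auto simp: good_def)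
  have fin: "finite (S j)" using Sj(1) finite_subset by blast
  have mem: "Min (S j) \<in> S j" using fin Sj(2) by (rule Min_in)
  have "par (Gm m n S X a j) (S j) = (\<Prod>t\<in>S j. X j t * (if t = Min (S j) then a j 0 else 1))"
    unfolding par_def using Sj(1) j by (intro prod.cong refl) (auto simp: Gm_def)
  also have "\<dots> = par (X j) (S j) * (\<Prod>t\<in>S j. if t = Min (S j) then a j 0 else 1)"
    by (simp add: prod.distrib par_def)
  also have "(\<Prod>t\<in>S j. if t = Min (S j) then a j 0 else 1) = a j 0"
    using fin mem by (simp add: prod.delta)
  finally show ?thesis .
qed


lemma reindex_side:
  assumes gd: "good m n \<sigma> S" and I: "I \<subseteq> {..<n}"
  shows "(\<Sum>X0\<in>Bl m n. \<Sum>a\<in>Bl 1 n. Hf (fA m n \<sigma> S X0 a) * (\<Prod>i\<in>I. a i 0))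
       = 2 ^ n * (\<Sum>X\<in>Bl m n. Hf X * (\<Prod>i\<in>I. \<sigma> i * par (X i) (S i)))"
proof -
  have step1: "(\<Sum>a\<in>Bl 1 n. Hf (fA m n \<sigma> S X0 a) * (\<Prod>i\<in>I. a i 0))
        = (\<Sum>a\<in>Bl 1 n. Hf (Gm m n S X0 a) * (\<Prod>i\<in>I. \<sigma> i * a i 0 * par (X0 i) (S i)))"
    if X0: "X0 \<in> Bl m n" for X0
  proof (rule sum.reindex_bij_witness[where i="tauf n \<sigma> S X0" and j="tauf n \<sigma> S X0"])
    fix a assume a: "a \<in> Bl 1 n"
    show "tauf n \<sigma> S X0 (tauf n \<sigma> S X0 a) = a" by (rule tau_inv[OF gd X0 a])
    show "tauf n \<sigma> S X0 a \<in> Bl 1 n" by (rule tau_mem[OF gd X0 a])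
    show "tauf n \<sigma> S X0 (tauf n \<sigma> S X0 a) = a" by (rule tau_inv[OF gd X0 a])
    show "tauf n \<sigma> S X0 a \<in> Bl 1 n" by (rule tau_mem[OF gd X0 a])
    have "(\<Prod>i\<in>I. \<sigma> i * tauf n \<sigma> S X0 a i 0 * par (X0 i) (S i)) = (\<Prod>i\<in>I. a i 0)"
    proof (rule prod.cong[OF refl])
      fix i assume "i \<in> I"
      then have i: "i < n" using I by auto
      have s1: "\<sigma> i * \<sigma> i = 1" using gd i by (intro pm_sq) (simp add: good_def)
      have s2: "par (X0 i) (S i) * par (X0 i) (S i) = 1"
        using gd i X0 by (intro par_sq) (auto simp: good_def Bl_mem)
      have "\<sigma> i * (\<sigma> i * a i 0 * par (X0 i) (S i)) * par (X0 i) (S i)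
              = (\<sigma> i * \<sigma> i) * (par (X0 i) (S i) * par (X0 i) (S i)) * a i 0"
        by (simp add: mult_ac)
      then show "\<sigma> i * tauf n \<sigma> S X0 a i 0 * par (X0 i) (S i) = a i 0"
        using s1 s2 i by (simp add: tau_apply)
    qed
    then show "Hf (Gm m n S X0 (tauf n \<sigma> S X0 a)) * (\<Prod>i\<in>I. \<sigma> i * tauf n \<sigma> S X0 a i 0 * par (X0 i) (S i))
          = Hf (fA m n \<sigma> S X0 a) * (\<Prod>i\<in>I. a i 0)"
      by (simp add: fA_def)
  qed
  have step2: "(\<Sum>X0\<in>Bl m n. Hf (Gm m n S X0 a) * (\<Prod>i\<in>I. \<sigma> i * a i 0 * par (X0 i) (S i)))
        = (\<Sum>X\<in>Bl m n. Hf X * (\<Prod>i\<in>I. \<sigma> i * par (X i) (S i)))"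
    if a: "a \<in> Bl 1 n" for a
  proof (rule sum.reindex_bij_witness[where i="\<lambda>X. Gm m n S X a" and j="\<lambda>X. Gm m n S X a"])
    fix X assume X: "X \<in> Bl m n"
    show "Gm m n S (Gm m n S X a) a = X" by (rule Gm_inv[OF X a])
    show "Gm m n S X a \<in> Bl m n" by (rule Gm_mem[OF X a])
    show "Gm m n S (Gm m n S X a) a = X" by (rule Gm_inv[OF X a])
    show "Gm m n S X a \<in> Bl m n" by (rule Gm_mem[OF X a])
    have "(\<Prod>i\<in>I. \<sigma> i * par (Gm m n S X a i) (S i)) = (\<Prod>i\<in>I. \<sigma> i * a i 0 * par (X i) (S i))"
    proof (rule prod.cong[OF refl])
      fix i assume "i \<in> I"
      then have i: "i < n" using I by auto
      show "\<sigma> i * par (Gm m n S X a i) (S i) = \<sigma> i * a i 0 * par (X i) (S i)"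
        using par_Gm[OF gd i] by (simp add: mult_ac)
    qed
    then show "Hf (Gm m n S X a) * (\<Prod>i\<in>I. \<sigma> i * par (Gm m n S X a i) (S i))
          = Hf (Gm m n S X a) * (\<Prod>i\<in>I. \<sigma> i * a i 0 * par (X i) (S i))"
      by simp
  qed
  have "(\<Sum>X0\<in>Bl m n. \<Sum>a\<in>Bl 1 n. Hf (fA m n \<sigma> S X0 a) * (\<Prod>i\<in>I. a i 0))
      = (\<Sum>X0\<in>Bl m n. \<Sum>a\<in>Bl 1 n. Hf (Gm m n S X0 a) * (\<Prod>i\<in>I. \<sigma> i * a i 0 * par (X0 i) (S i)))"
    by (rule sum.cong[OF refl], rule step1)
  also have "\<dots> = (\<Sum>a\<in>Bl 1 n. \<Sum>X0\<in>Bl m n. Hf (Gm m n S X0 a) * (\<Prod>i\<in>I. \<sigma> i * a i 0 * par (X0 i) (S i)))"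
    by (rule sum.swap)
  also have "\<dots> = (\<Sum>a\<in>Bl 1 n. \<Sum>X\<in>Bl m n. Hf X * (\<Prod>i\<in>I. \<sigma> i * par (X i) (S i)))"
    by (rule sum.cong[OF refl], rule step2)
  also have "\<dots> = 2 ^ n * (\<Sum>X\<in>Bl m n. Hf X * (\<Prod>i\<in>I. \<sigma> i * par (X i) (S i)))"
    by (simp add: card_Bl)
  finally show ?thesis .
qed


lemma D_eq:
  assumes gA: "good m1 n \<sigma> S" and gB: "good m2 n (\<lambda>_. 1) T" and I: "I \<subseteq> {..<n}"
  shows "(\<Sum>X0\<in>Bl m1 n. \<Sum>Y0\<in>Bl m2 n. \<Sum>a\<in>Bl 1 n. \<Sum>b\<in>Bl 1 n.
           C (fA m1 n \<sigma> S X0 a) (fA m2 n (\<lambda>_. 1) T Y0 b) * (\<Prod>i\<in>I. XOR (a i) (b i)))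
       = 4 ^ n * (\<Sum>X\<in>Bl m1 n. \<Sum>Y\<in>Bl m2 n. C X Y * (\<Prod>i\<in>I. \<sigma> i * par (X i) (S i) * par (Y i) (T i)))"
proof -
  define fa where "fa = fA m1 n \<sigma> S"
  define fb where "fb = fA m2 n (\<lambda>_. 1) T"
  define P1 :: "input \<Rightarrow> real" where "P1 a = (\<Prod>i\<in>I. a i 0)" for a
  define QA where "QA X = (\<Prod>i\<in>I. \<sigma> i * par (X i) (S i))" for X
  define QB where "QB Y = (\<Prod>i\<in>I. (\<lambda>_. 1::real) i * par (Y i) (T i))" for Y
  have "(\<Sum>X0\<in>Bl m1 n. \<Sum>Y0\<in>Bl m2 n. \<Sum>a\<in>Bl 1 n. \<Sum>b\<in>Bl 1 n.
           C (fa X0 a) (fb Y0 b) * (\<Prod>i\<in>I. XOR (a i) (b i)))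
      = (\<Sum>X0\<in>Bl m1 n. \<Sum>a\<in>Bl 1 n. \<Sum>Y0\<in>Bl m2 n. \<Sum>b\<in>Bl 1 n.
           P1 a * (C (fa X0 a) (fb Y0 b) * P1 b))"
  proof (rule sum.cong[OF refl])
    fix X0
    have "(\<Sum>Y0\<in>Bl m2 n. \<Sum>a\<in>Bl 1 n. \<Sum>b\<in>Bl 1 n. C (fa X0 a) (fb Y0 b) * (\<Prod>i\<in>I. XOR (a i) (b i)))
        = (\<Sum>a\<in>Bl 1 n. \<Sum>Y0\<in>Bl m2 n. \<Sum>b\<in>Bl 1 n. C (fa X0 a) (fb Y0 b) * (\<Prod>i\<in>I. XOR (a i) (b i)))"
      by (rule sum.swap)
    also have "\<dots> = (\<Sum>a\<in>Bl 1 n. \<Sum>Y0\<in>Bl m2 n. \<Sum>b\<in>Bl 1 n. P1 a * (C (fa X0 a) (fb Y0 b) * P1 b))"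
      by (intro sum.cong refl) (simp add: XOR_def P1_def prod.distrib mult_ac)
    finally show "(\<Sum>Y0\<in>Bl m2 n. \<Sum>a\<in>Bl 1 n. \<Sum>b\<in>Bl 1 n. C (fa X0 a) (fb Y0 b) * (\<Prod>i\<in>I. XOR (a i) (b i)))
        = (\<Sum>a\<in>Bl 1 n. \<Sum>Y0\<in>Bl m2 n. \<Sum>b\<in>Bl 1 n. P1 a * (C (fa X0 a) (fb Y0 b) * P1 b))" .
  qed
  also have "\<dots> = (\<Sum>X0\<in>Bl m1 n. \<Sum>a\<in>Bl 1 n. P1 a * (\<Sum>Y0\<in>Bl m2 n. \<Sum>b\<in>Bl 1 n. C (fa X0 a) (fb Y0 b) * P1 b))"
    by (simp only: sum_distrib_left)
  also have "\<dots> = (\<Sum>X0\<in>Bl m1 n. \<Sum>a\<in>Bl 1 n. P1 a * (2 ^ n * (\<Sum>Y\<in>Bl m2 n. C (fa X0 a) Y * QB Y)))"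
    unfolding fb_def P1_def QB_def by (intro sum.cong refl arg_cong[where f="\<lambda>t. _ * t"] reindex_side[OF gB I])
  also have "\<dots> = (\<Sum>X0\<in>Bl m1 n. \<Sum>a\<in>Bl 1 n. \<Sum>Y\<in>Bl m2 n. 2 ^ n * (QB Y * (C (fa X0 a) Y * P1 a)))"
    by (simp add: sum_distrib_left mult_ac)
  also have "\<dots> = (\<Sum>Y\<in>Bl m2 n. \<Sum>X0\<in>Bl m1 n. \<Sum>a\<in>Bl 1 n. 2 ^ n * (QB Y * (C (fa X0 a) Y * P1 a)))"
    by (subst sum.swap, rule sum.cong[OF refl], rule sum.swap)
  also have "\<dots> = (\<Sum>Y\<in>Bl m2 n. 2 ^ n * (QB Y * (\<Sum>X0\<in>Bl m1 n. \<Sum>a\<in>Bl 1 n. C (fa X0 a) Y * P1 a)))"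
    by (simp only: sum_distrib_left)
  also have "\<dots> = (\<Sum>Y\<in>Bl m2 n. 2 ^ n * (QB Y * (2 ^ n * (\<Sum>X\<in>Bl m1 n. C X Y * QA X))))"
    unfolding fa_def P1_def QA_def by (intro sum.cong refl arg_cong[where f="\<lambda>t. _ * t"] reindex_side[OF gA I])
  also have "\<dots> = 4 ^ n * (\<Sum>Y\<in>Bl m2 n. \<Sum>X\<in>Bl m1 n. C X Y * (QA X * QB Y))"
  proof -
    have "(4::real) ^ n = 2 ^ n * 2 ^ n" by (simp add: power_mult_distrib[symmetric])
    then show ?thesis by (simp add: sum_distrib_left mult_ac)
  qed
  also have "\<dots> = 4 ^ n * (\<Sum>X\<in>Bl m1 n. \<Sum>Y\<in>Bl m2 n. C X Y * (\<Prod>i\<in>I. \<sigma> i * par (X i) (S i) * par (Y i) (T i)))"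
    by (subst sum.swap) (simp add: QA_def QB_def prod.distrib mult_ac)
  finally show ?thesis unfolding fa_def fb_def .
qed


lemma expand_prod:
  fixes G :: "nat \<Rightarrow> real" and F :: "nat \<Rightarrow> 'u \<Rightarrow> real" and gh :: "'u \<Rightarrow> real"
  assumes inv: "\<And>j. j \<in> I \<Longrightarrow> G j = (\<Sum>u\<in>U. gh u * F j u)"
    and W: "W = (\<Sum>u\<in>U. \<bar>gh u\<bar>)" and Wpos: "W > 0" and fin: "finite U"
    and I: "I \<subseteq> {..<n}" and k: "card I = k"
  shows "(\<Prod>i\<in>I. G i) = W ^ k * (\<Sum>\<psi>\<in>{..<n} \<rightarrow>\<^sub>E U. (\<Prod>j<n. \<bar>gh (\<psi> j)\<bar> / W) * (\<Prod>i\<in>I. sgn (gh (\<psi> i)) * F i (\<psi> i)))"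
proof -
  define h where "h j u = \<bar>gh u\<bar> * (if j \<in> I then sgn (gh u) * F j u else 1 / W)" for j u
  have kn: "k \<le> n" using I k card_mono[of "{..<n}" I] by auto
  have "(\<Prod>i\<in>I. G i) = (\<Prod>j<n. if j \<in> I then G j else 1)"
  proof -
    have "{..<n} \<inter> I = I" using I by auto
    then show ?thesis using prod.inter_restrict[of "{..<n}" G I] by simp
  qed
  also have "\<dots> = (\<Prod>j<n. \<Sum>u\<in>U. h j u)"
  proof (rule prod.cong[OF refl])
    fix j
    show "(if j \<in> I then G j else 1) = (\<Sum>u\<in>U. h j u)"
    proof (cases "j \<in> I")
      case True
      have "(\<Sum>u\<in>U. h j u) = (\<Sum>u\<in>U. gh u * F j u)"
        unfolding h_def using True by (intro sum.cong refl) (simp add: mult.assoc[symmetric] abs_mult_sgn)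
      then show ?thesis using True inv by simp
    next
      case False
      have "(\<Sum>u\<in>U. h j u) = (\<Sum>u\<in>U. \<bar>gh u\<bar>) / W"
        unfolding h_def using False by (simp add: sum_divide_distrib)
      then show ?thesis using False W Wpos by simp
    qed
  qed
  also have "\<dots> = (\<Sum>\<psi>\<in>{..<n} \<rightarrow>\<^sub>E U. \<Prod>j<n. h j (\<psi> j))"
    by (rule prod_sum_PiE) (use fin in auto)
  also have "\<dots> = (\<Sum>\<psi>\<in>{..<n} \<rightarrow>\<^sub>E U. W ^ k * ((\<Prod>j<n. \<bar>gh (\<psi> j)\<bar> / W) * (\<Prod>i\<in>I. sgn (gh (\<psi> i)) * F i (\<psi> i))))"
  proof (rule sum.cong[OF refl])
    fix \<psi>
    let ?P = "\<Prod>j<n. \<bar>gh (\<psi> j)\<bar>"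
    let ?S = "\<Prod>i\<in>I. sgn (gh (\<psi> i)) * F i (\<psi> i)"
    have c: "card ({..<n} \<inter> - I) = n - k"
    proof -
      have "{..<n} \<inter> - I = {..<n} - I" by auto
      then show ?thesis using I k by (simp add: card_Diff_subset finite_subset)
    qed
    have i: "{..<n} \<inter> I = I" using I by auto
    have e1: "(\<Prod>j<n. h j (\<psi> j)) = ?P * (\<Prod>j<n. if j \<in> I then sgn (gh (\<psi> j)) * F j (\<psi> j) else 1 / W)"
      unfolding h_def by (simp add: prod.distrib)
    have e2: "(\<Prod>j<n. if j \<in> I then sgn (gh (\<psi> j)) * F j (\<psi> j) else 1 / W) = ?S * (1 / W) ^ (n - k)"
      by (subst prod.If_cases) (simp_all add: i c)
    have e3: "(\<Prod>j<n. \<bar>gh (\<psi> j)\<bar> / W) = ?P / W ^ n"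
      by (simp add: prod_dividef)
    have e4: "(W::real) ^ n = W ^ k * W ^ (n - k)"
      using kn by (simp add: power_add[symmetric])
    have "(\<Prod>j<n. h j (\<psi> j)) = ?P * (?S * (1 / W) ^ (n - k))" using e1 e2 by simp
    also have "\<dots> = W ^ k * (?P / W ^ n * ?S)"
      unfolding e4 using Wpos by (simp add: field_simps power_one_over)
    also have "\<dots> = W ^ k * ((\<Prod>j<n. \<bar>gh (\<psi> j)\<bar> / W) * ?S)" using e3 by simp
    finally show "(\<Prod>j<n. h j (\<psi> j)) = W ^ k * ((\<Prod>j<n. \<bar>gh (\<psi> j)\<bar> / W) * ?S)" .
  qed
  also have "\<dots> = W ^ k * (\<Sum>\<psi>\<in>{..<n} \<rightarrow>\<^sub>E U. (\<Prod>j<n. \<bar>gh (\<psi> j)\<bar> / W) * (\<Prod>i\<in>I. sgn (gh (\<psi> i)) * F i (\<psi> i)))"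
    by (simp only: sum_distrib_left)
  finally show ?thesis .
qed


lemma cube1_sum: "(\<Sum>x\<in>cube 1. x 0) = (0::real)"
proof -
  define e :: "real \<Rightarrow> nat \<Rightarrow> real" where "e c = (\<lambda>t. if t = 0 then c else undefined)" for c
  have eqc: "cube 1 = {e 1, e (-1)}"
  proof
    show "cube 1 \<subseteq> {e 1, e (-1)}"
    proof
      fix x assume x: "x \<in> cube 1"
      have x0: "x 0 = -1 \<or> x 0 = 1" using x by (simp add: cube_mem)
      have "x = e (x 0)"
      proof
        fix t show "x t = e (x 0) t"
        proof (cases "t = 0")
          case False
          then have "\<not> t < 1" by simp
          then show ?thesis using x False by (simp add: cube_mem e_def)
        qed (simp add: e_def)
      qed
      then show "x \<in> {e 1, e (-1)}" using x0 by auto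
    qed
    show "{e 1, e (-1)} \<subseteq> cube 1"
      by (auto simp: cube_mem e_def)
  qed
  have ne: "e 1 \<noteq> e (-1)"
  proof
    assume "e 1 = e (-1)"
    then have "e 1 0 = e (-1) 0" by simp
    then show False by (simp add: e_def)
  qed
  have "(\<Sum>x\<in>cube 1. x 0) = (\<Sum>x\<in>{e 1, e (-1)}. x 0)" by (simp only: eqc)
  also have "\<dots> = e 1 0 + e (-1) 0" using ne by simp
  also have "\<dots> = 0" by (simp add: e_def)
  finally show ?thesis .
qed

lemma XOR_gad: "x \<in> cube 1 \<Longrightarrow> y \<in> cube 1 \<Longrightarrow> XOR x y \<in> {-1, 1}"
  by (auto simp: XOR_def cube_mem)

lemma XOR_K: "c \<in> {-1, 1} \<Longrightarrow> real (card (Lv XOR 1 1 c)) = 2 ^ (1 + 1) / 2"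
proof -
  assume c: "c \<in> {-1, 1}"
  have "(\<Sum>x\<in>cube 1. \<Sum>y\<in>cube 1. XOR x y) = (\<Sum>x\<in>cube 1. x 0) * (\<Sum>y\<in>cube 1. y 0)"
    by (simp add: XOR_def sum_product)
  also have "\<dots> = 0" unfolding cube1_sum by simp
  finally have z: "(\<Sum>x\<in>cube 1. \<Sum>y\<in>cube 1. XOR x y) = 0" .
  show ?thesis by (rule balanced[of 1 1 XOR, OF XOR_gad z c])
qed

lemma psi_bound:
  assumes p: "p \<in> rand_protocols d" and gA: "good m1 n \<sigma> S" and gB: "good m2 n (\<lambda>_. 1) T"
  shows "(\<Sum>I\<in>Ik n k. \<bar>(\<Sum>X\<in>Bl m1 n. \<Sum>Y\<in>Bl m2 n. rvalue p X Y * (\<Prod>i\<in>I. \<sigma> i * par (X i) (S i) * par (Y i) (T i)))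
            / 2 ^ ((m1 + m2) * n)\<bar>) \<le> L1k_gadget XOR d 1 1 n k"
proof -
  define fa where "fa = fA m1 n \<sigma> S"
  define fb where "fb = fA m2 n (\<lambda>_. 1) T"
  define p' where "p' X0 Y0 = map_pmf (reinput (fa X0) (fb Y0)) p" for X0 Y0
  define Fv where "Fv X0 Y0 I = fhat (fiber XOR 1 1 n (rvalue (p' X0 Y0))) n I" for X0 Y0 I
  define Nn :: real where "Nn = 2 ^ ((m1 + m2) * n)"
  define L where "L = L1k_gadget XOR d 1 1 n k"
  have Nn: "Nn = real (card (Bl m1 n)) * real (card (Bl m2 n))"
    by (simp add: Nn_def card_Bl power_add add_mult_distrib)
  have Npos: "Nn > 0" by (simp add: Nn_def)
  have eqF: "Fv X0 Y0 I = (\<Sum>a\<in>Bl 1 n. \<Sum>b\<in>Bl 1 n. rvalue p (fa X0 a) (fb Y0 b) * (\<Prod>i\<in>I. XOR (a i) (b i))) / 4 ^ n"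
    if I: "I \<subseteq> {..<n}" for X0 Y0 I
  proof -
    have e4: "(2::real) ^ ((1 + 1) * n) = 4 ^ n" by (subst power_mult) simp
    have "Fv X0 Y0 I = fhat (fiber XOR 1 1 n (rvalue (p' X0 Y0))) n I" unfolding Fv_def ..
    also have "\<dots> = (\<Sum>X\<in>Bl 1 n. \<Sum>Y\<in>Bl 1 n. rvalue (p' X0 Y0) X Y * (\<Prod>i\<in>I. XOR (X i) (Y i))) / 2 ^ ((1 + 1) * n)"
      by (rule fhat_fiber[OF XOR_gad XOR_K I])
    also have "\<dots> = (\<Sum>a\<in>Bl 1 n. \<Sum>b\<in>Bl 1 n. rvalue p (fa X0 a) (fb Y0 b) * (\<Prod>i\<in>I. XOR (a i) (b i))) / 4 ^ n"
      unfolding e4 p'_def rvalue_map ..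
    finally show ?thesis .
  qed
  have eqD: "(\<Sum>X\<in>Bl m1 n. \<Sum>Y\<in>Bl m2 n. rvalue p X Y * (\<Prod>i\<in>I. \<sigma> i * par (X i) (S i) * par (Y i) (T i))) / Nn
      = (\<Sum>X0\<in>Bl m1 n. \<Sum>Y0\<in>Bl m2 n. Fv X0 Y0 I) / Nn"
    if I: "I \<subseteq> {..<n}" for I
  proof -
    have "(\<Sum>X0\<in>Bl m1 n. \<Sum>Y0\<in>Bl m2 n. Fv X0 Y0 I)
        = (\<Sum>X0\<in>Bl m1 n. \<Sum>Y0\<in>Bl m2 n. \<Sum>a\<in>Bl 1 n. \<Sum>b\<in>Bl 1 n.
             rvalue p (fa X0 a) (fb Y0 b) * (\<Prod>i\<in>I. XOR (a i) (b i))) / 4 ^ n"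
      by (simp add: eqF[OF I] sum_divide_distrib)
    also have "\<dots> = (\<Sum>X\<in>Bl m1 n. \<Sum>Y\<in>Bl m2 n. rvalue p X Y * (\<Prod>i\<in>I. \<sigma> i * par (X i) (S i) * par (Y i) (T i)))"
      unfolding fa_def fb_def D_eq[OF gA gB I] by simp
    finally show ?thesis by simp
  qed
  have Fbound: "(\<Sum>I\<in>Ik n k. \<bar>Fv X0 Y0 I\<bar>) \<le> L" for X0 Y0
  proof -
    have "(\<Sum>I\<in>Ik n k. \<bar>Fv X0 Y0 I\<bar>) = L1k (fiber XOR 1 1 n (rvalue (p' X0 Y0))) n k"
      by (simp add: L1k_Ik Fv_def)
    also have "\<dots> \<le> L" unfolding L_def p'_def
      by (rule L1k_le_gadget[OF rand_map[OF p]])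
    finally show ?thesis .
  qed
  have "(\<Sum>I\<in>Ik n k. \<bar>(\<Sum>X\<in>Bl m1 n. \<Sum>Y\<in>Bl m2 n. rvalue p X Y * (\<Prod>i\<in>I. \<sigma> i * par (X i) (S i) * par (Y i) (T i))) / Nn\<bar>)
      = (\<Sum>I\<in>Ik n k. \<bar>\<Sum>X0\<in>Bl m1 n. \<Sum>Y0\<in>Bl m2 n. Fv X0 Y0 I\<bar> / Nn)"
    using Npos by (intro sum.cong refl) (simp add: eqD Ik_def abs_divide)
  also have "\<dots> \<le> (\<Sum>I\<in>Ik n k. (\<Sum>X0\<in>Bl m1 n. \<Sum>Y0\<in>Bl m2 n. \<bar>Fv X0 Y0 I\<bar>) / Nn)"
  proof (rule sum_mono)
    fix I
    have "\<bar>\<Sum>X0\<in>Bl m1 n. \<Sum>Y0\<in>Bl m2 n. Fv X0 Y0 I\<bar> \<le> (\<Sum>X0\<in>Bl m1 n. \<bar>\<Sum>Y0\<in>Bl m2 n. Fv X0 Y0 I\<bar>)"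
      by (rule sum_abs)
    also have "\<dots> \<le> (\<Sum>X0\<in>Bl m1 n. \<Sum>Y0\<in>Bl m2 n. \<bar>Fv X0 Y0 I\<bar>)"
      by (intro sum_mono sum_abs)
    finally show "\<bar>\<Sum>X0\<in>Bl m1 n. \<Sum>Y0\<in>Bl m2 n. Fv X0 Y0 I\<bar> / Nn \<le> (\<Sum>X0\<in>Bl m1 n. \<Sum>Y0\<in>Bl m2 n. \<bar>Fv X0 Y0 I\<bar>) / Nn"
      using Npos by (simp add: divide_right_mono)
  qed
  also have "\<dots> = (\<Sum>X0\<in>Bl m1 n. \<Sum>Y0\<in>Bl m2 n. \<Sum>I\<in>Ik n k. \<bar>Fv X0 Y0 I\<bar>) / Nn"
  proof -
    have "(\<Sum>I\<in>Ik n k. \<Sum>X0\<in>Bl m1 n. \<Sum>Y0\<in>Bl m2 n. \<bar>Fv X0 Y0 I\<bar>) = (\<Sum>X0\<in>Bl m1 n. \<Sum>Y0\<in>Bl m2 n. \<Sum>I\<in>Ik n k. \<bar>Fv X0 Y0 I\<bar>)"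
      by (subst sum.swap, rule sum.cong[OF refl], rule sum.swap)
    then show ?thesis by (simp only: sum_divide_distrib[of _ "Ik n k", symmetric])
  qed
  also have "\<dots> \<le> (\<Sum>X0\<in>Bl m1 n. \<Sum>Y0\<in>Bl m2 n. L) / Nn"
    using Npos by (intro divide_right_mono sum_mono Fbound) simp
  also have "\<dots> = L"
  proof -
    have "(\<Sum>X0\<in>Bl m1 n. \<Sum>Y0\<in>Bl m2 n. L) = Nn * L" unfolding Nn by simp
    then show ?thesis using Npos by (simp only:) simp
  qed
  finally show ?thesis unfolding Nn_def L_def .
qed


theorem theorem7p6:
  fixes g :: "(nat \<Rightarrow> real) \<Rightarrow> (nat \<Rightarrow> real) \<Rightarrow> real"
    and m1 m2 k d n :: nat
  assumes gadget: "\<And>x y. x \<in> cube m1 \<Longrightarrow> y \<in> cube m2 \<Longrightarrow> g x y \<in> {-1, 1}"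
    and vanish: "\<And>S T. S \<subseteq> {..<m1} \<Longrightarrow> T \<subseteq> {..<m2} \<Longrightarrow> S = {} \<or> T = {}
                   \<Longrightarrow> ghat g m1 m2 S T = 0"
  shows "L1k_gadget g d m1 m2 n k
           \<le> (\<Sum>S\<in>Pow {..<m1}. \<Sum>T\<in>Pow {..<m2}. \<bar>ghat g m1 m2 S T\<bar>) ^ k
               * L1k_gadget XOR d 1 1 n k
       \<and> (\<Sum>S\<in>Pow {..<m1}. \<Sum>T\<in>Pow {..<m2}. \<bar>ghat g m1 m2 S T\<bar>) ^ k
               * L1k_gadget XOR d 1 1 n k
           \<le> 2 powr (real ((m1 + m2) * k) / 2) * L1k_gadget XOR d 1 1 n k"
proof -
  define U where "U = Pow {..<m1} \<times> Pow {..<m2}"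
  define gh where "gh u = ghat g m1 m2 (fst u) (snd u)" for u
  define W where "W = (\<Sum>u\<in>U. \<bar>gh u\<bar>)"
  define L where "L = L1k_gadget XOR d 1 1 n k"
  define Nn :: real where "Nn = 2 ^ ((m1 + m2) * n)"
  have finU: "finite U" by (simp add: U_def)
  have Wst: "(\<Sum>S\<in>Pow {..<m1}. \<Sum>T\<in>Pow {..<m2}. \<bar>ghat g m1 m2 S T\<bar>) = W"
    unfolding W_def U_def gh_def by (simp add: sum.cartesian_product case_prod_beta)
  have invp: "g x y = (\<Sum>u\<in>U. gh u * (par x (fst u) * par y (snd u)))"
    if "x \<in> cube m1" "y \<in> cube m2" for x y
    using ghat_inv[OF that, of g] unfolding U_def gh_def
    by (simp add: sum.cartesian_product case_prod_beta mult.assoc)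
  have W0: "W \<ge> 0" unfolding W_def by (simp add: sum_nonneg)
  have Wpos: "W > 0"
  proof (rule ccontr)
    assume "\<not> W > 0"
    then have "W = 0" using W0 by simp
    then have z: "\<forall>u\<in>U. \<bar>gh u\<bar> = 0" unfolding W_def using finU
      by (subst (asm) sum_nonneg_eq_0_iff) auto
    obtain x where x: "x \<in> cube m1" using cube_ne by blast
    obtain y where y: "y \<in> cube m2" using cube_ne by blast
    have "g x y = 0" using invp[OF x y] z by simp
    then show False using gadget[OF x y] by simp
  qed
  have gz: "ghat g m1 m2 {} {} = 0" by (rule vanish) auto
  have K: "real (card (Lv g m1 m2 c)) = 2 ^ (m1 + m2) / 2" if "c \<in> {-1, 1}" for c
    by (rule balanced[OF gadget sum_g_zero[OF gz] that])
  have L0: "L \<ge> 0" unfolding L_def by (rule gadget_nonneg)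
  have part1: "L1k_gadget g d m1 m2 n k \<le> W ^ k * L"
  proof (rule gadget_least)
    fix p assume p: "p \<in> rand_protocols d"
    define C where "C = rvalue p"
    define \<Psi> where "\<Psi> = {..<n} \<rightarrow>\<^sub>E U"
    define \<mu> where "\<mu> \<psi> = (\<Prod>j<n. \<bar>gh (\<psi> j)\<bar> / W)" for \<psi>
    define SS :: "(nat \<Rightarrow> nat set \<times> nat set) \<Rightarrow> input \<Rightarrow> input \<Rightarrow> nat set \<Rightarrow> real"
      where "SS \<psi> X Y I = (\<Prod>i\<in>I. sgn (gh (\<psi> i)) * (par (X i) (fst (\<psi> i)) * par (Y i) (snd (\<psi> i))))" for \<psi> X Y I
    define A where "A \<psi> I = (\<Sum>X\<in>Bl m1 n. \<Sum>Y\<in>Bl m2 n. C X Y * SS \<psi> X Y I)" for \<psi> I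
    define Dv where "Dv \<psi> I = A \<psi> I / Nn" for \<psi> I
    have fin\<Psi>: "finite \<Psi>" unfolding \<Psi>_def using finU by (auto intro!: finite_PiE)
    have \<mu>0: "\<mu> \<psi> \<ge> 0" for \<psi> unfolding \<mu>_def using W0 by (intro prod_nonneg) simp
    have \<mu>sum: "(\<Sum>\<psi>\<in>\<Psi>. \<mu> \<psi>) = 1"
    proof -
      have "(\<Sum>\<psi>\<in>\<Psi>. \<mu> \<psi>) = (\<Prod>j<n. \<Sum>u\<in>U. \<bar>gh u\<bar> / W)"
        unfolding \<mu>_def \<Psi>_def by (rule prod_sum_PiE[symmetric]) (use finU in auto)
      also have "\<dots> = (\<Prod>j<n. (1::real))"
        using Wpos by (intro prod.cong refl) (simp add: sum_divide_distrib[symmetric] W_def[symmetric])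
      finally show ?thesis by simp
    qed
    have cI: "fhat (fiber g m1 m2 n C) n I = W ^ k * (\<Sum>\<psi>\<in>\<Psi>. \<mu> \<psi> * Dv \<psi> I)" if I: "I \<in> Ik n k" for I
    proof -
      have Isub: "I \<subseteq> {..<n}" and Ic: "card I = k" using I by (auto simp: Ik_def)
      have "fhat (fiber g m1 m2 n C) n I
          = (\<Sum>X\<in>Bl m1 n. \<Sum>Y\<in>Bl m2 n. C X Y * (\<Prod>i\<in>I. g (X i) (Y i))) / Nn"
        unfolding Nn_def by (rule fhat_fiber[OF gadget K Isub])
      also have "\<dots> = (\<Sum>X\<in>Bl m1 n. \<Sum>Y\<in>Bl m2 n. C X Y * (W ^ k * (\<Sum>\<psi>\<in>\<Psi>. \<mu> \<psi> * SS \<psi> X Y I))) / Nn"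
      proof (intro arg_cong[where f="\<lambda>t. t / Nn"] sum.cong refl arg_cong[where f="\<lambda>t. C _ _ * t"])
        fix X Y assume X: "X \<in> Bl m1 n" and Y: "Y \<in> Bl m2 n"
        show "(\<Prod>i\<in>I. g (X i) (Y i)) = W ^ k * (\<Sum>\<psi>\<in>\<Psi>. \<mu> \<psi> * SS \<psi> X Y I)"
          unfolding \<Psi>_def \<mu>_def SS_def
        proof (rule expand_prod[OF _ W_def Wpos finU Isub Ic])
          fix j assume "j \<in> I"
          then have j: "j < n" using Isub by auto
          have "X j \<in> cube m1" "Y j \<in> cube m2" using X Y j by (auto simp: Bl_mem)
          then show "g (X j) (Y j) = (\<Sum>u\<in>U. gh u * (par (X j) (fst u) * par (Y j) (snd u)))"
            by (rule invp)
        qed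
      qed
      also have "\<dots> = (\<Sum>X\<in>Bl m1 n. \<Sum>Y\<in>Bl m2 n. \<Sum>\<psi>\<in>\<Psi>. W ^ k * (\<mu> \<psi> * (C X Y * SS \<psi> X Y I))) / Nn"
        by (simp add: sum_distrib_left mult_ac)
      also have "(\<Sum>X\<in>Bl m1 n. \<Sum>Y\<in>Bl m2 n. \<Sum>\<psi>\<in>\<Psi>. W ^ k * (\<mu> \<psi> * (C X Y * SS \<psi> X Y I)))
          = (\<Sum>X\<in>Bl m1 n. \<Sum>\<psi>\<in>\<Psi>. \<Sum>Y\<in>Bl m2 n. W ^ k * (\<mu> \<psi> * (C X Y * SS \<psi> X Y I)))"
        by (rule sum.cong[OF refl], rule sum.swap)
      also have "\<dots> = (\<Sum>\<psi>\<in>\<Psi>. \<Sum>X\<in>Bl m1 n. \<Sum>Y\<in>Bl m2 n. W ^ k * (\<mu> \<psi> * (C X Y * SS \<psi> X Y I)))"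
        by (rule sum.swap)
      also have "\<dots> = W ^ k * (\<Sum>\<psi>\<in>\<Psi>. \<mu> \<psi> * A \<psi> I)"
        unfolding A_def by (simp only: sum_distrib_left)
      also have "W ^ k * (\<Sum>\<psi>\<in>\<Psi>. \<mu> \<psi> * A \<psi> I) / Nn = W ^ k * (\<Sum>\<psi>\<in>\<Psi>. \<mu> \<psi> * Dv \<psi> I)"
        unfolding Dv_def by (simp add: sum_divide_distrib[symmetric])
      finally show ?thesis .
    qed
    have pb: "\<mu> \<psi> * (\<Sum>I\<in>Ik n k. \<bar>Dv \<psi> I\<bar>) \<le> \<mu> \<psi> * L" if \<psi>: "\<psi> \<in> \<Psi>" for \<psi>
    proof (cases "\<mu> \<psi> = 0")
      case True
      then show ?thesis by simp
    next
      case False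
      have nz: "gh (\<psi> j) \<noteq> 0" if j: "j < n" for j
      proof
        assume "gh (\<psi> j) = 0"
        then have "\<mu> \<psi> = 0" unfolding \<mu>_def using j by (intro prod_zero) auto
        then show False using False by simp
      qed
      define \<sigma> where "\<sigma> j = sgn (gh (\<psi> j))" for j
      define S where "S j = fst (\<psi> j)" for j
      define T where "T j = snd (\<psi> j)" for j
      have U\<psi>: "\<psi> j \<in> U" if "j < n" for j using \<psi> that by (auto simp: \<Psi>_def)
      have gA: "good m1 n \<sigma> S" and gB: "good m2 n (\<lambda>_. 1) T"
      proof -
        have "pm (\<sigma> j) \<and> S j \<subseteq> {..<m1} \<and> S j \<noteq> {} \<and> T j \<subseteq> {..<m2} \<and> T j \<noteq> {}" if j: "j < n" for j
        proof -
          have sub: "S j \<subseteq> {..<m1}" "T j \<subseteq> {..<m2}" using U\<psi>[OF j] by (auto simp: U_def S_def T_def)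
          have ne: "S j \<noteq> {} \<and> T j \<noteq> {}"
          proof (rule ccontr)
            assume "\<not> (S j \<noteq> {} \<and> T j \<noteq> {})"
            then have "ghat g m1 m2 (S j) (T j) = 0" using sub by (intro vanish) auto
            then show False using nz[OF j] by (simp add: gh_def S_def T_def)
          qed
          have "pm (\<sigma> j)" using nz[OF j] by (auto simp: \<sigma>_def pm_def sgn_if)
          then show ?thesis using sub ne by simp
        qed
        then show "good m1 n \<sigma> S" "good m2 n (\<lambda>_. 1) T" by (auto simp: good_def pm_def)
      qed
      have "(\<Sum>I\<in>Ik n k. \<bar>Dv \<psi> I\<bar>)
          = (\<Sum>I\<in>Ik n k. \<bar>(\<Sum>X\<in>Bl m1 n. \<Sum>Y\<in>Bl m2 n. rvalue p X Y * (\<Prod>i\<in>I. \<sigma> i * par (X i) (S i) * par (Y i) (T i)))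
            / 2 ^ ((m1 + m2) * n)\<bar>)"
        by (simp add: Dv_def A_def SS_def C_def Nn_def \<sigma>_def S_def T_def mult.assoc)
      also have "\<dots> \<le> L" unfolding L_def by (rule psi_bound[OF p gA gB])
      finally show ?thesis using \<mu>0[of \<psi>] by (simp add: mult_left_mono)
    qed
    have "L1k (fiber g m1 m2 n (rvalue p)) n k = (\<Sum>I\<in>Ik n k. \<bar>W ^ k * (\<Sum>\<psi>\<in>\<Psi>. \<mu> \<psi> * Dv \<psi> I)\<bar>)"
      unfolding L1k_Ik C_def[symmetric] by (intro sum.cong refl) (simp add: cI)
    also have "\<dots> \<le> (\<Sum>I\<in>Ik n k. W ^ k * (\<Sum>\<psi>\<in>\<Psi>. \<mu> \<psi> * \<bar>Dv \<psi> I\<bar>))"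
    proof (rule sum_mono)
      fix I
      have "\<bar>\<Sum>\<psi>\<in>\<Psi>. \<mu> \<psi> * Dv \<psi> I\<bar> \<le> (\<Sum>\<psi>\<in>\<Psi>. \<bar>\<mu> \<psi> * Dv \<psi> I\<bar>)" by (rule sum_abs)
      also have "\<dots> = (\<Sum>\<psi>\<in>\<Psi>. \<mu> \<psi> * \<bar>Dv \<psi> I\<bar>)" using \<mu>0 by (simp add: abs_mult)
      finally show "\<bar>W ^ k * (\<Sum>\<psi>\<in>\<Psi>. \<mu> \<psi> * Dv \<psi> I)\<bar> \<le> W ^ k * (\<Sum>\<psi>\<in>\<Psi>. \<mu> \<psi> * \<bar>Dv \<psi> I\<bar>)"
        using W0 by (simp add: abs_mult mult_left_mono)
    qed
    also have "\<dots> = W ^ k * (\<Sum>\<psi>\<in>\<Psi>. \<mu> \<psi> * (\<Sum>I\<in>Ik n k. \<bar>Dv \<psi> I\<bar>))"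
    proof -
      have "(\<Sum>I\<in>Ik n k. W ^ k * (\<Sum>\<psi>\<in>\<Psi>. \<mu> \<psi> * \<bar>Dv \<psi> I\<bar>)) = W ^ k * (\<Sum>I\<in>Ik n k. \<Sum>\<psi>\<in>\<Psi>. \<mu> \<psi> * \<bar>Dv \<psi> I\<bar>)"
        by (rule sum_distrib_left[symmetric])
      also have "(\<Sum>I\<in>Ik n k. \<Sum>\<psi>\<in>\<Psi>. \<mu> \<psi> * \<bar>Dv \<psi> I\<bar>) = (\<Sum>\<psi>\<in>\<Psi>. \<Sum>I\<in>Ik n k. \<mu> \<psi> * \<bar>Dv \<psi> I\<bar>)"
        by (rule sum.swap)
      also have "\<dots> = (\<Sum>\<psi>\<in>\<Psi>. \<mu> \<psi> * (\<Sum>I\<in>Ik n k. \<bar>Dv \<psi> I\<bar>))"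
        by (simp only: sum_distrib_left)
      finally show ?thesis .
    qed
    also have "\<dots> \<le> W ^ k * (\<Sum>\<psi>\<in>\<Psi>. \<mu> \<psi> * L)"
      using W0 by (intro mult_left_mono sum_mono pb) simp_all
    also have "\<dots> = W ^ k * L" by (simp add: sum_distrib_right[symmetric] \<mu>sum)
    finally show "L1k (fiber g m1 m2 n (rvalue p)) n k \<le> W ^ k * L" .
  qed
  have Wb: "W \<le> 2 powr (real (m1 + m2) / 2)"
  proof -
    have "W\<^sup>2 \<le> (\<Sum>u\<in>U. \<bar>gh u\<bar>\<^sup>2) * real (card U)"
      unfolding W_def by (rule sum_squared_le_sum_of_squares)
    also have "(\<Sum>u\<in>U. \<bar>gh u\<bar>\<^sup>2) = (\<Sum>S\<in>Pow {..<m1}. \<Sum>T\<in>Pow {..<m2}. ghat g m1 m2 S T * ghat g m1 m2 S T)"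
      by (simp add: U_def gh_def sum.cartesian_product case_prod_beta power2_eq_square)
    also have "\<dots> = 1" by (rule parseval[OF gadget])
    also have "real (card U) = 2 ^ (m1 + m2)"
      by (simp add: U_def card_cartesian_product card_Pow power_add)
    finally have "W\<^sup>2 \<le> 2 ^ (m1 + m2)" by simp
    then have "W \<le> sqrt (2 ^ (m1 + m2))" by (rule real_le_rsqrt)
    also have "sqrt (2 ^ (m1 + m2)) = 2 powr (real (m1 + m2) / 2)"
    proof -
      have e: "(2::real) powr real (m1 + m2) = 2 ^ (m1 + m2)" by (rule powr_realpow) simp
      have "(2::real) powr (real (m1 + m2) / 2) = sqrt (2 powr real (m1 + m2))"
        by (rule powr_half_sqrt_powr) simp
      then show ?thesis unfolding e by simp
    qed
    finally show ?thesis .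
  qed
  have part2: "W ^ k * L \<le> 2 powr (real ((m1 + m2) * k) / 2) * L"
  proof (rule mult_right_mono[OF _ L0])
    have "W ^ k \<le> (2 powr (real (m1 + m2) / 2)) ^ k" by (rule power_mono[OF Wb W0])
    also have "\<dots> = 2 powr (real k * (real (m1 + m2) / 2))" by (rule powr_power) simp
    also have "\<dots> = 2 powr (real ((m1 + m2) * k) / 2)" by (simp add: mult_ac)
    finally show "W ^ k \<le> 2 powr (real ((m1 + m2) * k) / 2)" .
  qed
  show ?thesis unfolding Wst L_def[symmetric] using part1 part2 by simp
qed


end
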